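(* Let $n\ge1$, let $\mathbf u(z)\in\mathbb R^n$ be a column vector function, let $A$ be a constant real skew-symmetric $n\times n$ matrix, and let $\nu\ne0$ be a constant. Define block matrices of block size $(1,n)\times(1,n)$ \[ {\cal B}_0=\begin{pmatrix} 1-\nu & 0\\ 0 & I_n \end{pmatrix},\quad {\cal B}_1=\begin{pmatrix} 0 & \mathbf u^T\\ \mathbf u & 0 \end{pmatrix},\quad {\cal B}_2=\begin{pmatrix} (\mathbf u,\mathbf u) & -(\mathbf u')^T\\ \mathbf u' & -\mathbf u\mathbf u^T \end{pmatrix}, \] \[ {\cal B}_3=\begin{pmatrix} 0 & 2(\mathbf u,\mathbf u)\mathbf u^T\\ 2(\mathbf u,\mathbf u)\mathbf u & \mathbf u'\mathbf u^T-\mathbf u(\mathbf u')^T \end{pmatrix},\quad {\cal A}_0=\begin{pmatrix} 0 & 0\\ 0 & A \end{pmatrix}, \] and \[ {\cal A}=-\nu^2\zeta(\zeta{\cal B}_0+{\cal B}_1)+z{\cal B}_0-\nu{\cal B}_2-\zeta^{-1}({\cal B}''_1-z{\cal B}_1-{\cal B}_3-{\cal A}_0),\qquad {\cal B}=\zeta{\cal B}_0+{\cal B}_1. \] Then the equation \[ \mathbf u'''= 3(\mathbf u,\mathbf u)\mathbf u'+3(\mathbf u,\mathbf u')\mathbf u+z\mathbf u'+\mathbf u+A\mathbf u \] admits the isomonodromic Lax representation ${\cal A}'={\cal B}_\zeta+[{\cal B},{\cal A}]$.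
   Context: Primes denote derivatives with respect to $z$; $\zeta$ is a spectral parameter independent of $z$; $(\cdot,\cdot)$ is the standard scalar product; $I_n$ the identity matrix. "Admits the Lax representation" means the matrix equation holds identically in $\zeta$ by virtue of the equation. *)

theory Defs
  imports "HOL-Analysis.Analysis"
begin

text \<open>The index type of the
(n+1) x (n+1) matrices is unit + 'n: the index Inl () is the first row/column,
the indices Inr i (i :: 'n) are the remaining n rows/columns.
blk a r c D is the block matrix with top-left entry a, top-right row r^T,
bottom-left column c and bottom-right n x n block D.\<close>

definition blk :: "real \<Rightarrow> real^'n \<Rightarrow> real^'n \<Rightarrow> real^'n::finite^'n \<Rightarrow> real^(unit + 'n)^(unit + 'n)" where
  "blk a r c D = (\<chi> i j. case i of
       Inl _ \<Rightarrow> (case j of Inl _ \<Rightarrow> a | Inr j' \<Rightarrow> r $ j')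
     | Inr i' \<Rightarrow> (case j of Inl _ \<Rightarrow> c $ i' | Inr j' \<Rightarrow> D $ i' $ j'))"

definition outer :: "real^'n::finite \<Rightarrow> real^'n \<Rightarrow> real^'n^'n" where
  "outer x y = (\<chi> i j. x $ i * y $ j)"

definition B0 :: "real \<Rightarrow> real^(unit + 'n::finite)^(unit + 'n)" where
  "B0 \<nu> = blk (1 - \<nu>) 0 0 (mat 1)"

definition B1 :: "real^'n::finite \<Rightarrow> real^(unit + 'n)^(unit + 'n)" where
  "B1 u = blk 0 u u 0"

text \<open>B2 u u' with u' the derivative of u\<close>
definition B2 :: "real^'n::finite \<Rightarrow> real^'n \<Rightarrow> real^(unit + 'n)^(unit + 'n)" where
  "B2 u u' = blk (u \<bullet> u) (- u') u' (- outer u u)"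

definition B3 :: "real^'n::finite \<Rightarrow> real^'n \<Rightarrow> real^(unit + 'n)^(unit + 'n)" where
  "B3 u u' = blk 0 ((2 * (u \<bullet> u)) *\<^sub>R u) ((2 * (u \<bullet> u)) *\<^sub>R u) (outer u' u - outer u u')"

definition A0 :: "real^'n::finite^'n \<Rightarrow> real^(unit + 'n)^(unit + 'n)" where
  "A0 A = blk 0 0 0 A"

text \<open>The matrix \<A> at the point z, given u(z), u'(z), u''(z).
Note B1'' = B1 (u'') since B1 is linear in u.\<close>
definition LaxA :: "real \<Rightarrow> real^'n::finite^'n \<Rightarrow> real \<Rightarrow> real \<Rightarrow> real^'n \<Rightarrow> real^'n \<Rightarrow> real^'n
                    \<Rightarrow> real^(unit + 'n)^(unit + 'n)" where
  "LaxA \<nu> A \<zeta> z u u1 u2 =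
     - (\<nu>\<^sup>2 * \<zeta>) *\<^sub>R (\<zeta> *\<^sub>R B0 \<nu> + B1 u) + z *\<^sub>R B0 \<nu> - \<nu> *\<^sub>R B2 u u1
     - (inverse \<zeta>) *\<^sub>R (B1 u2 - z *\<^sub>R B1 u - B3 u u1 - A0 A)"

definition LaxB :: "real \<Rightarrow> real \<Rightarrow> real^'n::finite \<Rightarrow> real^(unit + 'n)^(unit + 'n)" where
  "LaxB \<nu> \<zeta> u = \<zeta> *\<^sub>R B0 \<nu> + B1 u"

end

theory Submission
  imports Defs
begin


lemma vec_vd:
  fixes f :: "real \<Rightarrow> 'a::euclidean_space^'m"
  assumes a: "\<And>i. ((\<lambda>t. f t $ i) has_vector_derivative f' $ i) (at z)"
  shows "(f has_vector_derivative f') (at z)"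
proof -
  have b: "((\<lambda>t. f t $ i \<bullet> b) has_vector_derivative (f' $ i \<bullet> b)) (at z)" for i b
    using bounded_linear.has_vector_derivative[OF bounded_linear_inner_left a] .
  show ?thesis
    unfolding has_vector_derivative_def
    apply (subst has_derivative_componentwise_within)
    using b by (auto simp: Basis_vec_def inner_axis has_vector_derivative_def)
qed

lemma vd_nth:
  fixes f :: "real \<Rightarrow> 'a::real_normed_vector^'m"
  assumes "(f has_vector_derivative f') F"
  shows "((\<lambda>t. f t $ i) has_vector_derivative f' $ i) F"
  using bounded_linear.has_vector_derivative[OF bounded_linear_vec_nth assms] .
lemma sum_UNIV_plus: "sum g (UNIV::('a::finite + 'b::finite) set) = sum (g \<circ> Inl) UNIV + sum (g \<circ> Inr) UNIV"
  by (metis UNIV_Plus_UNIV finite sum.Plus)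

lemma blk_nth[simp]:
  "blk a r c D $ Inl x $ Inl y = a" "blk a r c D $ Inl x $ Inr j = r $ j"
  "blk a r c D $ Inr i $ Inl y = c $ i" "blk a r c D $ Inr i $ Inr j = D $ i $ j"
  by (simp_all add: blk_def)

lemma blk_ext: "(\<And>x y. M $ Inl x $ Inl y = a) \<Longrightarrow> (\<And>j x. M $ Inl x $ Inr j = r $ j) \<Longrightarrow>
   (\<And>i y. M $ Inr i $ Inl y = c $ i) \<Longrightarrow> (\<And>i j. M $ Inr i $ Inr j = D $ i $ j) \<Longrightarrow> M = blk a r c D"
  unfolding vec_eq_iff
  apply (intro allI)
  subgoal for i j by (cases i; cases j) auto
  done

lemma blk_add: "blk a r c D + blk a' r' c' D' = blk (a+a') (r+r') (c+c') (D+D')"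
  by (rule blk_ext) auto
lemma blk_diff: "blk a r c D - blk a' r' c' D' = blk (a-a') (r-r') (c-c') (D-D')"
  by (rule blk_ext) auto
lemma blk_uminus: "- blk a r c D = blk (-a) (-r) (-c) (-D)"
  by (rule blk_ext) auto
lemma blk_scaleR: "s *\<^sub>R blk a r c D = blk (s*a) (s *\<^sub>R r) (s *\<^sub>R c) (s *\<^sub>R D)"
  by (rule blk_ext) auto
lemma blk_mult: "blk a r c D ** blk a' r' c' D' =
   blk (a*a' + r \<bullet> c') (a *\<^sub>R r' + r v* D') (a' *\<^sub>R c + D *v c') (outer c r' + D ** D')"
  by (rule blk_ext) (auto simp: matrix_matrix_mult_def sum_UNIV_plus inner_vec_def
       vector_matrix_mult_def matrix_vector_mult_def outer_def mult.commute)

lemma blk_vd: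
  assumes "(a has_vector_derivative a') (at z)" "(r has_vector_derivative r') (at z)"
    "(c has_vector_derivative c') (at z)" "(D has_vector_derivative D') (at z)"
  shows "((\<lambda>t. blk (a t) (r t) (c t) (D t)) has_vector_derivative blk a' r' c' D') (at z)"
proof (rule vec_vd)
  fix i show "((\<lambda>t. blk (a t) (r t) (c t) (D t) $ i) has_vector_derivative blk a' r' c' D' $ i) (at z)"
  proof (rule vec_vd)
    fix j show "((\<lambda>t. blk (a t) (r t) (c t) (D t) $ i $ j) has_vector_derivative blk a' r' c' D' $ i $ j) (at z)"
      using assms by (cases i; cases j) (auto intro!: vd_nth)
  qed
qed

lemma outer_vd:
  assumes "(x has_vector_derivative x') (at z)" "(y has_vector_derivative y') (at z)"
  shows "((\<lambda>t. outer (x t) (y t)) has_vector_derivative (outer x' (y z) + outer (x z) y')) (at z)"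
proof (intro vec_vd)
  fix i j
  have "((\<lambda>t. x t $ i * y t $ j) has_vector_derivative (x z $ i * y' $ j + x' $ i * y z $ j)) (at z)"
    by (intro has_vector_derivative_mult vd_nth assms)
  then show "((\<lambda>t. outer (x t) (y t) $ i $ j) has_vector_derivative (outer x' (y z) + outer (x z) y') $ i $ j) (at z)"
    by (simp add: outer_def algebra_simps)
qed

lemma inner_vd:
  fixes x y :: "real \<Rightarrow> real^'n"
  assumes "(x has_vector_derivative x') (at z)" "(y has_vector_derivative y') (at z)"
  shows "((\<lambda>t. x t \<bullet> y t) has_vector_derivative (x z \<bullet> y' + x' \<bullet> y z)) (at z)"
  using bounded_bilinear.has_vector_derivative[OF bounded_bilinear_inner assms] by simp

lemma inner_fd:
  fixes x y :: "real \<Rightarrow> real^'n"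
  assumes "(x has_vector_derivative x') (at z)" "(y has_vector_derivative y') (at z)"
  shows "((\<lambda>t. x t \<bullet> y t) has_field_derivative (x z \<bullet> y' + x' \<bullet> y z)) (at z)"
  using inner_vd[OF assms] by (simp add: has_real_derivative_iff_has_vector_derivative)

lemma vd_eq: "(f has_vector_derivative X) F \<Longrightarrow> X = Y \<Longrightarrow> (f has_vector_derivative Y) F"
  by simp

lemma vm_add: "x v* (M + N) = x v* M + x v* (N::real^'n^'m)"
  by (simp add: vec_eq_iff vector_matrix_mult_def sum.distrib algebra_simps)
lemma vm_diff: "x v* (M - N) = x v* M - x v* (N::real^'n^'m)"
  by (simp add: vec_eq_iff vector_matrix_mult_def sum_subtractf algebra_simps)
lemma vm_uminus: "x v* (- N) = - (x v* (N::real^'n^'m))"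
  by (simp add: vec_eq_iff vector_matrix_mult_def sum_negf)
lemma vm_scaleR: "x v* (s *\<^sub>R N) = s *\<^sub>R (x v* (N::real^'n^'m))"
  by (simp add: vec_eq_iff vector_matrix_mult_def sum_distrib_left algebra_simps)
lemma mv_add: "(M + N) *v x = M *v x + (N::real^'n^'m) *v x"
  by (simp add: vec_eq_iff matrix_vector_mult_def sum.distrib algebra_simps)
lemma mv_diff: "(M - N) *v x = M *v x - (N::real^'n^'m) *v x"
  by (simp add: vec_eq_iff matrix_vector_mult_def sum_subtractf algebra_simps)
lemma mv_uminus: "(- N) *v x = - ((N::real^'n^'m) *v x)"
  by (simp add: vec_eq_iff matrix_vector_mult_def sum_negf)
lemma mv_scaleR: "(s *\<^sub>R N) *v x = s *\<^sub>R ((N::real^'n^'m) *v x)"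
  by (simp add: vec_eq_iff matrix_vector_mult_def sum_distrib_left algebra_simps)
lemma vm_outer: "x v* outer y w = (x \<bullet> y) *\<^sub>R (w::real^'n)"
  by (simp add: vec_eq_iff vector_matrix_mult_def outer_def inner_vec_def sum_distrib_left algebra_simps)
lemma mv_outer: "outer y w *v x = (w \<bullet> x) *\<^sub>R (y::real^'n)"
  by (simp add: vec_eq_iff matrix_vector_mult_def outer_def inner_vec_def sum_distrib_left algebra_simps)
lemma vm_mat1: "x v* mat 1 = (x::real^'n)"
  by (simp add: vec_eq_iff vector_matrix_mult_def mat_def if_distrib cong: if_cong)
lemma mm_scaleR_left: "(s *\<^sub>R M) ** N = s *\<^sub>R (M ** (N::real^'n^'n))"
  by (simp add: vec_eq_iff matrix_matrix_mult_def sum_distrib_left algebra_simps)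
lemma mm_scaleR_right: "M ** (s *\<^sub>R N) = s *\<^sub>R (M ** (N::real^'n^'n))"
  by (simp add: vec_eq_iff matrix_matrix_mult_def sum_distrib_left algebra_simps)

lemma blk_cong: "a=a' \<Longrightarrow> r=r' \<Longrightarrow> c=c' \<Longrightarrow> D=D' \<Longrightarrow> blk a r c D = blk a' r' c' D'"
  by simp

theorem mainTheorem11:
  fixes u u1 u2 u3 :: "real \<Rightarrow> real^'n" and A :: "real^'n^'n"
    and \<nu> :: real and S :: "real set"
  assumes skew: "transpose A = - A"
    and nu: "\<nu> \<noteq> 0"
    and S: "open S"
    and d1: "\<And>z. z \<in> S \<Longrightarrow> (u has_vector_derivative u1 z) (at z)"
    and d2: "\<And>z. z \<in> S \<Longrightarrow> (u1 has_vector_derivative u2 z) (at z)"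
    and d3: "\<And>z. z \<in> S \<Longrightarrow> (u2 has_vector_derivative u3 z) (at z)"
    and eq: "\<And>z. z \<in> S \<Longrightarrow>
       u3 z = (3 * (u z \<bullet> u z)) *\<^sub>R u1 z + (3 * (u z \<bullet> u1 z)) *\<^sub>R u z
              + z *\<^sub>R u1 z + u z + A *v u z"
  shows "\<forall>\<zeta>::real. \<zeta> \<noteq> 0 \<longrightarrow> (\<forall>z\<in>S.
     ((\<lambda>t. LaxA \<nu> A \<zeta> t (u t) (u1 t) (u2 t)) has_vector_derivative
        (B0 \<nu> + (LaxB \<nu> \<zeta> (u z) ** LaxA \<nu> A \<zeta> z (u z) (u1 z) (u2 z)
                 - LaxA \<nu> A \<zeta> z (u z) (u1 z) (u2 z) ** LaxB \<nu> \<zeta> (u z)))) (at z))"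
proof (intro allI impI ballI)
  fix \<zeta> z :: real assume \<zeta>: "\<zeta> \<noteq> 0" and z: "z \<in> S"
  define fa where "fa t = -(\<nu>\<^sup>2*\<zeta>)*(\<zeta>*(1-\<nu>)) + t*(1-\<nu>) - \<nu>*(u t \<bullet> u t)" for t
  define fr where "fr t = -(\<nu>\<^sup>2*\<zeta>) *\<^sub>R u t + \<nu> *\<^sub>R u1 t - inverse \<zeta> *\<^sub>R (u2 t - t *\<^sub>R u t - (2*(u t \<bullet> u t)) *\<^sub>R u t)" for t
  define fc where "fc t = -(\<nu>\<^sup>2*\<zeta>) *\<^sub>R u t - \<nu> *\<^sub>R u1 t - inverse \<zeta> *\<^sub>R (u2 t - t *\<^sub>R u t - (2*(u t \<bullet> u t)) *\<^sub>R u t)" for t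
  define fD where "fD t = (-(\<nu>\<^sup>2*\<zeta>*\<zeta>) + t) *\<^sub>R mat 1 + \<nu> *\<^sub>R outer (u t) (u t) + inverse \<zeta> *\<^sub>R (outer (u1 t) (u t) - outer (u t) (u1 t) + A)" for t
  have LA: "LaxA \<nu> A \<zeta> t (u t) (u1 t) (u2 t) = blk (fa t) (fr t) (fc t) (fD t)" for t
    by (rule blk_ext) (simp_all add: LaxA_def B0_def B1_def B2_def B3_def A0_def fa_def fr_def fc_def fD_def
        outer_def mat_def algebra_simps)
  have LB: "LaxB \<nu> \<zeta> (u z) = blk (\<zeta>*(1-\<nu>)) (u z) (u z) (\<zeta> *\<^sub>R mat 1)"
    by (rule blk_ext) (simp_all add: LaxB_def B0_def B1_def mat_def)
  have du: "(u has_vector_derivative u1 z) (at z)" "(u1 has_vector_derivative u2 z) (at z)"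
     "(u2 has_vector_derivative u3 z) (at z)" using d1 d2 d3 z by auto
  define ga where "ga = (1-\<nu>) - \<nu>*(2*(u z \<bullet> u1 z))"
  define w where "w = u3 z - u z - z *\<^sub>R u1 z - (4*(u z \<bullet> u1 z)) *\<^sub>R u z - (2*(u z \<bullet> u z)) *\<^sub>R u1 z"
  define gr where "gr = -(\<nu>\<^sup>2*\<zeta>) *\<^sub>R u1 z + \<nu> *\<^sub>R u2 z - inverse \<zeta> *\<^sub>R w"
  define gc where "gc = -(\<nu>\<^sup>2*\<zeta>) *\<^sub>R u1 z - \<nu> *\<^sub>R u2 z - inverse \<zeta> *\<^sub>R w"
  define gD where "gD = mat 1 + \<nu> *\<^sub>R (outer (u1 z) (u z) + outer (u z) (u1 z)) + inverse \<zeta> *\<^sub>R (outer (u2 z) (u z) - outer (u z) (u2 z))"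
  have skewA: "u z v* A = - (A *v u z)"
    by (metis skew transpose_matrix_vector mv_uminus)
  have dv: "((\<lambda>t. blk (fa t) (fr t) (fc t) (fD t)) has_vector_derivative blk ga gr gc gD) (at z)"
    unfolding fa_def fr_def fc_def fD_def
    apply (rule blk_vd)
    apply (rule vd_eq, (rule derivative_intros inner_vd outer_vd du DERIV_const DERIV_ident)+)
    subgoal by (simp add: ga_def inner_commute)
    subgoal
      apply (rule vd_eq, (rule derivative_intros inner_vd inner_fd outer_vd du DERIV_const DERIV_ident)+)
      by (simp add: gr_def w_def inner_commute vec_eq_iff outer_def algebra_simps)
    subgoal
      apply (rule vd_eq, (rule derivative_intros inner_vd inner_fd outer_vd du DERIV_const DERIV_ident)+)
      by (simp add: gc_def w_def inner_commute vec_eq_iff outer_def algebra_simps)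
    subgoal
      apply (rule vd_eq, (rule derivative_intros inner_vd inner_fd outer_vd du DERIV_const DERIV_ident)+)
      by (simp add: gD_def w_def inner_commute vec_eq_iff outer_def algebra_simps)
    done
  show "((\<lambda>t. LaxA \<nu> A \<zeta> t (u t) (u1 t) (u2 t)) has_vector_derivative
        (B0 \<nu> + (LaxB \<nu> \<zeta> (u z) ** LaxA \<nu> A \<zeta> z (u z) (u1 z) (u2 z)
                 - LaxA \<nu> A \<zeta> z (u z) (u1 z) (u2 z) ** LaxB \<nu> \<zeta> (u z)))) (at z)"
    using dv
    unfolding LA LB
    apply (rule vd_eq)
    apply (simp only: blk_mult blk_diff blk_add B0_def)
    apply (rule blk_cong)
    subgoal by (simp add: fa_def fr_def fc_def ga_def inner_simps inner_commute algebra_simps)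
    subgoal 
      apply (simp add: fa_def fr_def fD_def gr_def w_def eq[OF z] vm_add vm_diff vm_scaleR vm_uminus vm_outer vm_mat1 skewA)
      apply (simp add: vec_eq_iff field_simps \<zeta> power2_eq_square)
      done
    subgoal 
      apply (simp add: fa_def fc_def fD_def gc_def w_def eq[OF z] mv_add mv_diff mv_scaleR mv_uminus mv_outer)
      apply (simp add: vec_eq_iff field_simps \<zeta> power2_eq_square inner_commute)
      done
    subgoal 
      apply (simp add: fr_def fc_def fD_def gD_def mm_scaleR_left mm_scaleR_right)
      apply (simp add: vec_eq_iff outer_def field_simps \<zeta> power2_eq_square)
      done
    done
qed
end
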